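(* Let $n\in\mathbb{N}$, $0\le\alpha\le1$, and let $S\subseteq\mathbb{F}_2^n$ with $|S|\ge\alpha 2^n$. Then there exists $a\in\mathbb{F}_2^n$ such that the translate $S+\{a\}=\{x+a:x\in S\}$ contains a chain $C$ (with respect to the partial order $\le$ below) with $|C|\ge\alpha n$.
   Context: The partial order $\le$ on $\mathbb{F}_2^n$ is coordinatewise: $x\le y$ iff $x_i\le y_i$ (viewing $0<1$) for every coordinate $i$. A chain is a set of pairwise comparable elements. Addition is in $\mathbb{F}_2^n$. *)

theory Defs
  imports Complex_Main
begin

text \<open>Elements of F_2^n are represented as boolean lists of length n
  (False = 0, True = 1).\<close>

definition F2n :: "nat \<Rightarrow> bool list set" where
  "F2n n = {x. length x = n}"

definition vle :: "bool list \<Rightarrow> bool list \<Rightarrow> bool" where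
  "vle x y \<longleftrightarrow> length x = length y \<and> (\<forall>i < length x. x ! i \<longrightarrow> y ! i)"

definition vadd :: "bool list \<Rightarrow> bool list \<Rightarrow> bool list" where
  "vadd x y = map2 (\<lambda>a b. a \<noteq> b) x y"

definition translate :: "bool list set \<Rightarrow> bool list \<Rightarrow> bool list set" where
  "translate S a = (\<lambda>x. vadd x a) ` S"

definition is_chain :: "bool list set \<Rightarrow> bool" where
  "is_chain C \<longleftrightarrow> (\<forall>x\<in>C. \<forall>y\<in>C. vle x y \<or> vle y x)"

end

theory Submission
  imports Defs
begin

lemma vadd_len[simp]: "length (vadd x y) = min (length x) (length y)"
  by (simp add: vadd_def)

lemma vadd_nth: "i < length x \<Longrightarrow> i < length y \<Longrightarrow> vadd x y ! i = (x ! i \<noteq> y ! i)"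
  by (simp add: vadd_def)

lemma vadd_inv: "length x = length a \<Longrightarrow> vadd (vadd x a) a = x"
  by (rule nth_equalityI) (auto simp: vadd_nth)

lemma vadd_comm: "vadd x a = vadd a x"
  by (rule nth_equalityI) (auto simp: vadd_nth)

lemma finite_F2n: "finite (F2n n)"
  unfolding F2n_def using finite_lists_length_eq[of "UNIV::bool set" n] by simp

lemma card_F2n: "card (F2n n) = 2 ^ n"
  unfolding F2n_def using card_lists_length_eq[of "UNIV::bool set" n] by simp

lemma mem_translate:
  assumes "S \<subseteq> F2n n" "a \<in> F2n n" "y \<in> F2n n"
  shows "y \<in> translate S a \<longleftrightarrow> vadd y a \<in> S"
proof
  assume "y \<in> translate S a"
  then obtain x where x: "x \<in> S" "y = vadd x a" unfolding translate_def by auto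
  then have "length x = length a" using assms by (auto simp: F2n_def)
  then show "vadd y a \<in> S" using x vadd_inv by simp
next
  assume "vadd y a \<in> S"
  moreover have "vadd (vadd y a) a = y" using assms by (auto simp: F2n_def vadd_inv)
  ultimately show "y \<in> translate S a" unfolding translate_def by force
qed

lemma count_rep: "count_list (replicate k x) x = k"
  by (induction k) auto

definition M :: "nat \<Rightarrow> bool list set" where
  "M n = (\<lambda>k. replicate k True @ replicate (n-k) False) ` {0..n}"

lemma M_sub: "M n \<subseteq> F2n n"
  by (auto simp: M_def F2n_def)

lemma M_card: "card (M n) = n + 1"
proof -
  have "inj_on (\<lambda>k. replicate k True @ replicate (n-k) False) {0..n}"
  proof (rule inj_onI)
    fix k l assume kl: "k \<in> {0..n}" "l \<in> {0..n}"
      "replicate k True @ replicate (n-k) False = replicate l True @ replicate (n-l) False"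
    then have "count_list (replicate k True @ replicate (n-k) False) True
             = count_list (replicate l True @ replicate (n-l) False) True" by simp
    then show "k = l" by (simp add: count_rep)
  qed
  then show ?thesis unfolding M_def by (simp add: card_image)
qed

lemma rep_le:
  assumes "k \<le> l" "l \<le> n"
  shows "vle (replicate k True @ replicate (n-k) False) (replicate l True @ replicate (n-l) False)"
  unfolding vle_def using assms by (auto simp: nth_append)

lemma M_chain: "is_chain (M n)"
  unfolding is_chain_def
proof (intro ballI)
  fix x y assume "x \<in> M n" "y \<in> M n"
  then obtain k l where kl: "k \<le> n" "l \<le> n" "x = replicate k True @ replicate (n-k) False"
     "y = replicate l True @ replicate (n-l) False" unfolding M_def by auto
  show "vle x y \<or> vle y x"
  proof (cases "k \<le> l")
    case True then show ?thesis using rep_le[of k l n] kl by simp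
  next
    case False then show ?thesis using rep_le[of l k n] kl by simp
  qed
qed

lemma card_shift:
  assumes "S \<subseteq> F2n n" "y \<in> F2n n"
  shows "card {a \<in> F2n n. vadd y a \<in> S} = card S"
proof -
  have ly: "length y = n" using assms(2) by (simp add: F2n_def)
  have inv: "vadd y (vadd y a) = a" if "length a = n" for a
    using vadd_inv[of a y] vadd_comm[of a y] vadd_comm[of "vadd a y" y] ly that by simp
  have "bij_betw (\<lambda>a. vadd y a) {a \<in> F2n n. vadd y a \<in> S} S"
  proof (rule bij_betw_byWitness[where f'="\<lambda>s. vadd y s"])
    show "\<forall>a\<in>{a \<in> F2n n. vadd y a \<in> S}. vadd y (vadd y a) = a"
      using inv by (simp add: F2n_def)
    show "\<forall>s\<in>S. vadd y (vadd y s) = s"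
      using inv assms(1) by (auto simp: F2n_def)
    show "(\<lambda>a. vadd y a) ` {a \<in> F2n n. vadd y a \<in> S} \<subseteq> S" by blast
    show "(\<lambda>s. vadd y s) ` S \<subseteq> {a \<in> F2n n. vadd y a \<in> S}"
    proof
      fix t assume "t \<in> (\<lambda>s. vadd y s) ` S"
      then obtain s where s: "s \<in> S" "t = vadd y s" by blast
      have ls: "length s = n" using s assms(1) by (auto simp: F2n_def)
      then have "vadd y t = s" using s inv by simp
      moreover have "length t = n" using s(2) ls ly by simp
      ultimately show "t \<in> {a \<in> F2n n. vadd y a \<in> S}" using s by (simp add: F2n_def)
    qed
  qed
  then show ?thesis by (rule bij_betw_same_card)
qed

theorem lemma4p3:
  fixes n :: nat and \<alpha> :: real and S :: "bool list set"
  assumes "0 \<le> \<alpha>" and "\<alpha> \<le> 1"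
    and "S \<subseteq> F2n n"
    and "real (card S) \<ge> \<alpha> * 2 ^ n"
  shows "\<exists>a \<in> F2n n. \<exists>C. C \<subseteq> translate S a \<and> is_chain C \<and> real (card C) \<ge> \<alpha> * real n"
proof (rule ccontr)
  assume "\<not> ?thesis"
  then have lt: "\<forall>a \<in> F2n n. real (card (M n \<inter> translate S a)) < \<alpha> * real n"
    using M_chain unfolding is_chain_def by (meson inf_le2 not_le IntD1)
  have fin: "finite (M n)" using finite_F2n M_sub finite_subset by blast
  have "(\<Sum>a\<in>F2n n. card (M n \<inter> translate S a)) = (\<Sum>a\<in>F2n n. \<Sum>y\<in>M n. if vadd y a \<in> S then 1 else 0)"
  proof (rule sum.cong[OF refl])
    fix a assume a: "a \<in> F2n n"
    have "M n \<inter> translate S a = {y \<in> M n. vadd y a \<in> S}"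
      using mem_translate[OF assms(3) a] M_sub by blast
    then show "card (M n \<inter> translate S a) = (\<Sum>y\<in>M n. if vadd y a \<in> S then 1 else 0)"
      using fin by (simp add: sum.If_cases Collect_conj_eq Int_commute)
  qed
  also have "\<dots> = (\<Sum>y\<in>M n. \<Sum>a\<in>F2n n. if vadd y a \<in> S then 1 else 0)"
    by (rule sum.swap)
  also have "\<dots> = (\<Sum>y\<in>M n. card S)"
  proof (rule sum.cong[OF refl])
    fix y assume "y \<in> M n"
    then have y: "y \<in> F2n n" using M_sub by auto
    have "(\<Sum>a\<in>F2n n. if vadd y a \<in> S then 1 else 0) = card {a \<in> F2n n. vadd y a \<in> S}"
      using finite_F2n by (simp add: sum.If_cases Collect_conj_eq Int_commute)
    then show "(\<Sum>a\<in>F2n n. if vadd y a \<in> S then 1 else 0) = card S"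
      using card_shift[OF assms(3) y] by simp
  qed
  also have "\<dots> = (n + 1) * card S" using M_card by simp
  finally have eq: "(\<Sum>a\<in>F2n n. card (M n \<inter> translate S a)) = (n + 1) * card S" .
  have ne: "F2n n \<noteq> {}" using card_F2n[of n] by auto
  have "real (\<Sum>a\<in>F2n n. card (M n \<inter> translate S a)) = (\<Sum>a\<in>F2n n. real (card (M n \<inter> translate S a)))"
    by simp
  also have "\<dots> < (\<Sum>a\<in>F2n n. \<alpha> * real n)"
    by (rule sum_strict_mono[OF finite_F2n ne]) (use lt in auto)
  also have "\<dots> = 2 ^ n * (\<alpha> * real n)" by (simp add: card_F2n)
  finally have A: "real ((n + 1) * card S) < 2 ^ n * (\<alpha> * real n)" using eq by simp
  have B: "\<alpha> * 2 ^ n * real n \<le> real (card S) * real n"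
    using mult_right_mono[OF assms(4), of "real n"] by simp
  have "2 ^ n * (\<alpha> * real n) \<le> real n * real (card S)"
    using B by (simp only: mult.commute mult.left_commute)
  also have "\<dots> \<le> real ((n + 1) * card S)" by simp
  finally show False using A by simp
qed

end
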